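(* Let $\Omega \subset \mathbb{R}^d$ with $d \ge 3$ be a bounded Lipschitz domain. Define the conformal Killing space $$\mathbf{CK}\coloneqq\{\boldsymbol{u}:\ \boldsymbol{u}(\mathbf{x}) = \mathbf{a} + \lambda\mathbf{x} + A\mathbf{x} + 2(\mathbf{b}\cdot\mathbf{x})\mathbf{x} - \|\mathbf{x}\|^2\mathbf{b}\ \text{ for } \mathbf{x}\in\Omega\},$$ where $\mathbf{a}, \mathbf{b} \in \mathbb{R}^d$, $\lambda \in \mathbb{R}$, and $A \in \mathbb{R}^{d\times d}$ is skew-symmetric. If $\boldsymbol{\varphi}\in \mathbf{CK}$ satisfies $\boldsymbol{\varphi}|_{\partial\Omega}=\mathbf{0}$, then $\boldsymbol{\varphi}=\mathbf{0}$ in $\Omega$.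
   Context: $\|\mathbf{x}\|$ denotes the Euclidean norm of $\mathbf{x}\in\mathbb{R}^d$. *)

theory Defs
  imports "HOL-Analysis.Analysis"
begin

definition lipschitz_domain :: "(real ^ 'n) set \<Rightarrow> bool" where
  "lipschitz_domain \<Omega> \<longleftrightarrow>
     open \<Omega> \<and> connected \<Omega> \<and> \<Omega> \<noteq> {} \<and>
     (\<forall>p \<in> frontier \<Omega>. \<exists>r > 0. \<exists>e :: real ^ 'n. \<exists>h :: real ^ 'n \<Rightarrow> real. \<exists>L.
        norm e = 1 \<and>
        L-lipschitz_on {y. y \<bullet> e = 0} h \<and>
        \<Omega> \<inter> ball p r = {x \<in> ball p r. x \<bullet> e < h (x - (x \<bullet> e) *\<^sub>R e)})"

definition ck_field ::
  "real ^ 'n \<Rightarrow> real \<Rightarrow> real ^ 'n ^ 'n \<Rightarrow> real ^ 'n \<Rightarrow> real ^ 'n \<Rightarrow> real ^ 'n" where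
  "ck_field a lam A b x =
     a + lam *\<^sub>R x + A *v x + (2 * (b \<bullet> x)) *\<^sub>R x - (norm x)\<^sup>2 *\<^sub>R b"

end

theory Submission
  imports Defs
begin

lemma quad_roots:
  fixes c0 c1 c2 :: "'a::real_vector"
  assumes h1: "c0 + t1 *\<^sub>R c1 + (t1^2) *\<^sub>R c2 = 0"
    and h2: "c0 + t2 *\<^sub>R c1 + (t2^2) *\<^sub>R c2 = 0" and ne: "t1 \<noteq> t2"
  shows "c0 = (t1*t2) *\<^sub>R c2"
proof -
  have "t2 *\<^sub>R (c0 + t1 *\<^sub>R c1 + (t1^2) *\<^sub>R c2) - t1 *\<^sub>R (c0 + t2 *\<^sub>R c1 + (t2^2) *\<^sub>R c2) = 0"
    using h1 h2 by simp
  then have "(t2 - t1) *\<^sub>R (c0 - (t1*t2) *\<^sub>R c2) = 0"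
    by (simp add: algebra_simps power2_eq_square)
  then show ?thesis using ne by simp
qed

lemma expand:
  "ck_field a lam A b (x0 + t *\<^sub>R v) = ck_field a lam A b x0
     + t *\<^sub>R (lam *\<^sub>R v + A *v v + (2*(b \<bullet> v)) *\<^sub>R x0 + (2*(b \<bullet> x0)) *\<^sub>R v - (2*(x0 \<bullet> v)) *\<^sub>R b)
     + (t^2) *\<^sub>R ((2*(b \<bullet> v)) *\<^sub>R v - (norm v)\<^sup>2 *\<^sub>R b)"
proof -
  have n: "(norm (x0 + t *\<^sub>R v))\<^sup>2 = (norm x0)\<^sup>2 + (2*t*(x0 \<bullet> v)) + t^2 * (norm v)\<^sup>2"
    unfolding power2_norm_eq_inner
    by (simp add: inner_add_left inner_add_right inner_commute algebra_simps power2_eq_square del: inner_real_def)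
  show ?thesis
    unfolding ck_field_def n
    by (simp add: algebra_simps inner_add inner_commute
      matrix_vector_right_distrib power2_eq_square scaleR_add_right)
qed

lemma frontier_hit:
  fixes \<Omega> :: "'a::real_normed_vector set"
  assumes "open \<Omega>" "bounded \<Omega>" "x0 \<in> \<Omega>" "v \<noteq> 0"
  shows "\<exists>t>0. x0 + t *\<^sub>R v \<in> frontier \<Omega>"
proof -
  obtain B where B: "\<forall>x\<in>\<Omega>. norm x \<le> B" using assms(2) bounded_pos by blast
  define T where "T = (B + norm x0 + 1) / norm v"
  have nv: "norm v > 0" using assms(4) by simp
  have B0: "B \<ge> 0" using B assms(3) norm_ge_zero order_trans by blast
  have "norm (T *\<^sub>R v) = B + norm x0 + 1"
    using nv B0 assms(3) unfolding T_def by (auto simp: field_simps)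
  moreover have "norm (T *\<^sub>R v) \<le> norm (x0 + T *\<^sub>R v) + norm x0"
    by (metis add_diff_cancel_left' norm_triangle_ineq4 add.commute)
  ultimately have "norm (x0 + T *\<^sub>R v) > B" by linarith
  then have nout: "x0 + T *\<^sub>R v \<notin> \<Omega>" using B by force
  have "closed_segment x0 (x0 + T *\<^sub>R v) \<inter> frontier \<Omega> \<noteq> {}"
    apply (rule connected_Int_frontier)
    using assms(3) nout by auto
  then obtain y where y: "y \<in> closed_segment x0 (x0 + T *\<^sub>R v)" "y \<in> frontier \<Omega>" by blast
  then obtain u where u: "u \<in> {0..1}" "y = (1 - u) *\<^sub>R x0 + u *\<^sub>R (x0 + T *\<^sub>R v)"
    unfolding closed_segment_def by auto
  have y2: "y = x0 + (u*T) *\<^sub>R v" using u by (simp add: algebra_simps)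
  have "y \<noteq> x0" using y(2) assms(1,3) by (metis frontier_def DiffD2 interior_open)
  then have "u \<noteq> 0" using y2 by auto
  moreover have "T > 0" unfolding T_def using nv B assms(3)
    by (smt (verit) divide_pos_pos norm_ge_zero)
  ultimately show ?thesis using y2 y(2) u(1) by (intro exI[of _ "u*T"]) auto
qed

theorem mainTheorem1:
  fixes \<Omega> :: "(real ^ 'n) set"
    and a b :: "real ^ 'n" and lam :: real and A :: "real ^ 'n ^ 'n"
  assumes "CARD('n) \<ge> 3"
    and "bounded \<Omega>" and "lipschitz_domain \<Omega>"
    and "transpose A = - A"
    and "\<forall>x \<in> frontier \<Omega>. ck_field a lam A b x = 0"
  shows "\<forall>x \<in> \<Omega>. ck_field a lam A b x = 0"
proof (rule ccontr)
  assume "\<not> ?thesis"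
  then obtain x0 where x0: "x0 \<in> \<Omega>" and wne: "ck_field a lam A b x0 \<noteq> 0" by blast
  define w where "w = ck_field a lam A b x0"
  have op: "open \<Omega>" using assms(3) unfolding lipschitz_domain_def by blast
  have key: "\<exists>k. k \<noteq> 0 \<and> w = k *\<^sub>R ((2*(b \<bullet> v)) *\<^sub>R v - (norm v)\<^sup>2 *\<^sub>R b)" if vne: "v \<noteq> 0" for v
  proof -
    obtain t2 where t2: "t2 > 0" "x0 + t2 *\<^sub>R v \<in> frontier \<Omega>"
      using frontier_hit[OF op assms(2) x0 vne] by blast
    obtain s where s: "s > 0" "x0 + s *\<^sub>R (-v) \<in> frontier \<Omega>"
      using frontier_hit[OF op assms(2) x0, of "-v"] vne by auto
    have z2: "ck_field a lam A b (x0 + t2 *\<^sub>R v) = 0" using t2 assms(5) by blast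
    have z1: "ck_field a lam A b (x0 + (-s) *\<^sub>R v) = 0" using s assms(5) by simp
    have "w = ((-s)*t2) *\<^sub>R ((2*(b \<bullet> v)) *\<^sub>R v - (norm v)\<^sup>2 *\<^sub>R b)"
      unfolding w_def
      apply (rule quad_roots)
      using z1 z2 s t2 by (auto simp only: expand)
    then show ?thesis using s t2 by (intro exI[of _ "(-s)*t2"]) auto
  qed
  obtain i j :: 'n where ij: "i \<noteq> j"
  proof -
    have "\<exists>i j :: 'n. i \<noteq> j"
    proof (rule ccontr)
      assume "\<not> ?thesis"
      then have "UNIV \<subseteq> {undefined :: 'n}" by auto
      then have "CARD('n) \<le> 1" by (metis card.insert card.empty card_mono finite.emptyI finite.insertI empty_iff One_nat_def)
      then show False using assms(1) by linarith
    qed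
    then show ?thesis using that by blast
  qed
  obtain v :: "real ^ 'n" where v: "v \<noteq> 0" "b \<bullet> v = 0"
  proof (cases "b $ i = 0")
    case True
    then show ?thesis using that[of "axis i 1"] by (simp add: inner_axis axis_eq_0_iff)
  next
    case False
    let ?v = "axis i (b $ j) - axis j (b $ i)"
    have "?v $ j \<noteq> 0" using False ij by (simp add: axis_def)
    then have "?v \<noteq> 0" by auto
    moreover have "b \<bullet> ?v = 0" by (simp add: inner_diff_right inner_axis)
    ultimately show ?thesis using that by blast
  qed
  obtain k where k: "k \<noteq> 0" "w = k *\<^sub>R ((2*(b \<bullet> v)) *\<^sub>R v - (norm v)\<^sup>2 *\<^sub>R b)"
    using key[OF v(1)] by blast
  have wv: "w \<bullet> v = 0" using k(2) v(2) by (simp add: inner_diff_left inner_commute)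
  have bne: "b \<noteq> 0" using k(2) v(2) wne w_def by auto
  have v'ne: "v + b \<noteq> 0"
  proof
    assume "v + b = 0"
    then have "b \<bullet> (v + b) = 0" by simp
    then show False using v(2) bne by (simp add: inner_add_right)
  qed
  obtain k' where k': "k' \<noteq> 0" "w = k' *\<^sub>R ((2*(b \<bullet> (v+b))) *\<^sub>R (v+b) - (norm (v+b))\<^sup>2 *\<^sub>R b)"
    using key[OF v'ne] by blast
  have "w \<bullet> v = k' * (2 * (b \<bullet> b) * (v \<bullet> v))"
    unfolding k'(2) using v(2) by (simp add: inner_diff_left inner_diff_right inner_add_left inner_add_right inner_commute algebra_simps)
  moreover have "b \<bullet> b > 0" "v \<bullet> v > 0" using bne v(1) by auto
  ultimately have "w \<bullet> v \<noteq> 0" using k'(1) by simp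
  then show False using wv by simp
qed

end
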